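(* For the boundary Markov chain $(M_n)$ started from any fixed initial state and any $\varepsilon>0$, almost surely \[ \lim_{n\to\infty} \frac{M_n \log^{2+\varepsilon} n}{n^{2/3}} = \infty . \]
   Context: The boundary Markov chain is the Markov chain $(M_n)_{n\ge0}$ on $\{0,1,2,\dots\}$ with $M_{n+1}=M_n+X_n$. Given $M_n=m$, its step $X_n$ has the law \[ \mathbb P(X_n=1\mid M_n=m)=\frac{2m+3}{3m+3}. \] For $1\le k\le m$, \[ \mathbb P(X_n=-k\mid M_n=m)=\frac{2(2k-2)!}{(k-1)!(k+1)!}\cdot\frac{m!^2(2m-2k+1)!}{(m-k)!^2(2m+1)!}. \] *)

theory Defs
  imports "HOL-Probability.Probability"
begin

definition bmc_step_prob :: "nat \<Rightarrow> int \<Rightarrow> real" where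
  "bmc_step_prob m x =
     (if x = 1 then (2 * real m + 3) / (3 * real m + 3)
      else if - int m \<le> x \<and> x \<le> -1 then
        (let k = nat (- x) in
          (2 * fact (2*k - 2) / (fact (k - 1) * fact (k + 1))) *
          (fact m ^ 2 * fact (2*m - 2*k + 1) / (fact (m - k) ^ 2 * fact (2*m + 1))))
      else 0)"

definition bmc_trans :: "nat \<Rightarrow> nat \<Rightarrow> real" where
  "bmc_trans m m' = bmc_step_prob m (int m' - int m)"

definition boundary_markov_chain :: "'a measure \<Rightarrow> (nat \<Rightarrow> 'a \<Rightarrow> nat) \<Rightarrow> nat \<Rightarrow> bool" where
  "boundary_markov_chain M X m0 \<longleftrightarrow>
     prob_space M \<and>
     (\<forall>n. X n \<in> measurable M (count_space UNIV)) \<and>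
     measure M {\<omega> \<in> space M. X 0 \<omega> = m0} = 1 \<and>
     (\<forall>n (s :: nat \<Rightarrow> nat).
        measure M {\<omega> \<in> space M. \<forall>i\<le>Suc n. X i \<omega> = s i} =
        measure M {\<omega> \<in> space M. \<forall>i\<le>n. X i \<omega> = s i} * bmc_trans (s n) (s (Suc n)))"

end

theory Submission
  imports Defs
begin


definition bb :: "nat \<Rightarrow> real" where "bb m = fact (2*m) / (fact m ^ 2 * 4 ^ m)"
definition phi :: "nat \<Rightarrow> real" where "phi m = fact m ^ 2 * 4 ^ m / fact (2*m+1)"

lemma bb_pos: "bb m > 0" by (simp add: bb_def)
lemma phi_pos: "phi m > 0" by (simp add: phi_def)

lemma phi_bb: "phi m = 1 / ((2*real m+1) * bb m)"
proof -
  have "fact (2*m+1) = (2*real m+1) * (fact (2*m) :: real)" by (simp add: fact_Suc)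
  then show ?thesis by (simp add: phi_def bb_def)
qed

lemma bb_Suc: "bb (Suc m) = bb m * (2*real m+1) / (2*real m+2)"
proof -
  have e: "fact (2*Suc m) = (2*real m+2)*(2*real m+1) * (fact (2*m) :: real)"
    by (simp add: fact_Suc algebra_simps)
  have f: "fact (Suc m) = (real m+1) * (fact m :: real)" by (simp add: fact_Suc)
  have p: "(fact m :: real) > 0" "(fact (2*m) :: real) > 0" by auto
  show ?thesis unfolding bb_def e f using p by (simp add: divide_simps) (simp add: algebra_simps power2_eq_square)
qed

lemma phi_Suc: "phi (Suc m) = phi m * (2*real m+2) / (2*real m+3)"
proof -
  have b: "bb m > 0" by (rule bb_pos)
  have "phi (Suc m) = 1 / ((2*real m+3) * (bb m * (2*real m+1) / (2*real m+2)))"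
    unfolding phi_bb bb_Suc by (simp add: algebra_simps)
  also have "\<dots> = phi m * (2*real m+2) / (2*real m+3)"
    unfolding phi_bb using b by (simp add: divide_simps)
  finally show ?thesis .
qed

lemma phi_0: "phi 0 = 1" by (simp add: phi_def)

lemma phi_antimono: "m \<le> m' \<Longrightarrow> phi m' \<le> phi m"
proof (induction m' rule: dec_induct)
  case base then show ?case by simp
next
  case (step n)
  have "phi (Suc n) \<le> phi n" unfolding phi_Suc using phi_pos[of n]
    by (simp add: divide_simps)
  then show ?case using step by simp
qed

lemma phi_le1: "phi m \<le> 1" using phi_antimono[of 0 m] phi_0 by simp

lemma bb_sq_lower: "bb m ^ 2 * (4*real m+1) \<ge> 1"
proof (induction m)
  case 0 then show ?case by (simp add: bb_def)
next
  case (Suc m)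
  define x where "x = real m"
  have x: "x \<ge> 0" by (simp add: x_def)
  have sq: "bb (Suc m) ^ 2 = bb m ^ 2 * (2*x+1)^2 / (2*x+2)^2"
    by (simp add: bb_Suc power_divide power_mult_distrib x_def)
  have "bb (Suc m) ^ 2 * (4*real (Suc m)+1) = bb m ^ 2 * ((2*x+1)^2 * (4*x+5) / (2*x+2)^2)"
    unfolding sq by (simp add: x_def algebra_simps)
  also have "\<dots> \<ge> bb m ^ 2 * (4*x+1)"
  proof -
    have eq: "(2*x+1)^2 * (4*x+5) = (4*x+1) * (2*x+2)^2 + 1" by (simp add: power2_eq_square algebra_simps)
    have "(2*x+1)^2 * (4*x+5) / (2*x+2)^2 \<ge> (4*x+1)"
      using x by (simp add: le_divide_eq eq)
    then show ?thesis by (intro mult_left_mono) auto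
  qed
  finally show ?case using Suc by (simp add: x_def)
qed

lemma bb_sq_upper: "bb m ^ 2 * (2*real m+1) \<le> 1"
proof (induction m)
  case 0 then show ?case by (simp add: bb_def)
next
  case (Suc m)
  define x where "x = real m"
  have x: "x \<ge> 0" by (simp add: x_def)
  have sq: "bb (Suc m) ^ 2 = bb m ^ 2 * (2*x+1)^2 / (2*x+2)^2"
    by (simp add: bb_Suc power_divide power_mult_distrib x_def)
  have "bb (Suc m) ^ 2 * (2*real (Suc m)+1) = bb m ^ 2 * ((2*x+1)^2 * (2*x+3) / (2*x+2)^2)"
    unfolding sq by (simp add: x_def algebra_simps)
  also have "\<dots> \<le> bb m ^ 2 * (2*x+1)"
  proof -
    have eq: "(2*x+1)^2 * (2*x+3) + (2*x+1) = (2*x+1) * (2*x+2)^2" by (simp add: power2_eq_square algebra_simps)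
    have "(2*x+1)^2 * (2*x+3) / (2*x+2)^2 \<le> (2*x+1)"
      using x by (simp add: divide_le_eq) (use eq in linarith)
    then show ?thesis by (intro mult_left_mono) auto
  qed
  finally show ?case using Suc by (simp add: x_def)
qed

lemma qsum: "(\<Sum>k\<in>{1..m}. bb (k-1) / (2*real k*(real k+1))) = 1/3 - bb m / (3*(real m+1))"
proof (induction m)
  case 0 then show ?case by (simp add: bb_def)
next
  case (Suc m)
  have "(\<Sum>k\<in>{1..Suc m}. bb (k-1) / (2*real k*(real k+1))) = (\<Sum>k\<in>{1..m}. bb (k-1) / (2*real k*(real k+1))) + bb m / (2*(real m+1)*(real m+2))"
    by (simp add: algebra_simps)
  also have "\<dots> = 1/3 - bb (Suc m) / (3*(real (Suc m)+1))"
    unfolding Suc bb_Suc by (simp add: divide_simps) (simp add: algebra_simps)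
  finally show ?case .
qed



lemma D_aux:
  fixes x y :: real assumes x: "x \<ge> 0" and y: "y > 0" and l: "y^2*(4*x+1) \<ge> 1"
  shows "1 / (48*((2*x+1)*y)^3) \<le> y / (3*(x+1))"
proof -
  have "(y^2*(4*x+1))^2 \<ge> 1" using l by (simp add: one_le_power)
  hence y4: "y^4*(4*x+1)^2 \<ge> 1" by (simp add: power_mult_distrib flip: power_mult)
  have poly: "(3*(x+1)) * (4*x+1)^2 \<le> 48 * (2*x+1)^3"
  proof -
    have "48 * (2*x+1)^3 - (3*(x+1)) * (4*x+1)^2 = 336*x^3 + 504 * x^2 + 261*x + 45"
      by (simp add: power2_eq_square power3_eq_cube algebra_simps)
    moreover have "336*x^3 + 504 * x^2 + 261*x + 45 \<ge> 0" using x by simp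
    ultimately show ?thesis by linarith
  qed
  have "3*(x+1) \<le> 3*(x+1) * (y^4*(4*x+1)^2)" using y4 x by simp
  also have "\<dots> = y^4 * ((3*(x+1)) * (4*x+1)^2)" by simp
  also have "\<dots> \<le> y^4 * (48 * (2*x+1)^3)" using poly by (intro mult_left_mono) auto
  finally have k: "3*(x+1) \<le> 48*((2*x+1)*y)^3 * y" by (simp add: power_mult_distrib power3_eq_cube power4_eq_xxxx mult_ac)
  have p1: "48*((2*x+1)*y)^3 > 0" using x y by simp
  show ?thesis using k p1 x by (simp add: divide_simps mult_ac)
qed

lemma D_lower: "bb m / (3*(real m+1)) \<ge> phi m ^ 3 / 48"
proof -
  have "phi m ^ 3 / 48 = 1 / (48 * ((2*real m+1) * bb m)^3)"
    by (simp add: phi_bb power_one_over)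
  also have "\<dots> \<le> bb m / (3*(real m+1))"
    by (rule D_aux) (use bb_pos bb_sq_lower in auto)
  finally show ?thesis .
qed


lemma trans_nonneg: "bmc_trans m m' \<ge> 0"
  unfolding bmc_trans_def bmc_step_prob_def Let_def by (auto intro!: mult_nonneg_nonneg divide_nonneg_nonneg)

lemma trans_zero_big: "m' > Suc m \<Longrightarrow> bmc_trans m m' = 0"
  unfolding bmc_trans_def bmc_step_prob_def by auto

lemma trans_zero_same: "bmc_trans m m = 0"
  unfolding bmc_trans_def bmc_step_prob_def by auto

lemma trans_up: "bmc_trans m (Suc m) = (2*real m+3)/(3*real m+3)"
  unfolding bmc_trans_def bmc_step_prob_def by simp

lemma down_aux:
  fixes A F G H J K x :: real and i j :: nat
  assumes "A > 0" "F > 0" "G > 0" "H > 0" "J > 0" "K > 0" "x \<ge> 0"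
  shows "(2*A/(F*((1+x)*(2+x)*F)) * (G^2*H/(J^2*K))) * (J^2*4^j/H)
       = G^2*(4^j*4*4^i)/K * (A/(F^2*4^i)) / (2*(1+x)*((1+x)+1))"
  using assms by (simp add: divide_simps) (simp add: algebra_simps power2_eq_square)

lemma step_neg: assumes "1 \<le> k" "k \<le> m"
  shows "bmc_step_prob m (- int k) = 2 * fact (2*k-2) / (fact (k-1) * fact (k+1)) *
     (fact m ^ 2 * fact (2*m-2*k+1) / (fact (m-k) ^ 2 * fact (2*m+1)))"
  using assms unfolding bmc_step_prob_def Let_def by simp

lemma trans_down_ij:
  "bmc_trans (j+Suc i) j * phi j = phi (j+Suc i) * bb i / (2*real (Suc i)*(real (Suc i)+1))"
proof -
  have x: "int j - int (j + Suc i) = - int (Suc i)" by simp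
  have e1: "2*Suc i - 2 = 2*i" "Suc i - 1 = i" "Suc i + 1 = i+2" "2*(j+Suc i) - 2*Suc i + 1 = 2*j+1"
     "j + Suc i - Suc i = j" by simp_all
  have v: "bmc_trans (j+Suc i) j = 2 * fact (2*i) / (fact i * fact (i+2)) *
     (fact (j+Suc i) ^ 2 * fact (2*j+1) / (fact j ^ 2 * fact (2*(j+Suc i)+1)))"
  proof -
    have t: "bmc_trans (j+Suc i) j = bmc_step_prob (j+Suc i) (- int (Suc i))"
      unfolding bmc_trans_def x by (rule refl)
    have s: "bmc_step_prob (j+Suc i) (- int (Suc i)) = 2 * fact (2*Suc i-2) / (fact (Suc i-1) * fact (Suc i+1)) *
     (fact (j+Suc i) ^ 2 * fact (2*(j+Suc i)-2*Suc i+1) / (fact (j+Suc i-Suc i) ^ 2 * fact (2*(j+Suc i)+1)))"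
      by (rule step_neg) simp_all
    show ?thesis unfolding t s by (simp only: e1)
  qed
  have f2: "fact (i+2) = (1+real i)*(2+real i)*(fact i::real)"
    by (simp add: fact_Suc numeral_2_eq_2 algebra_simps)
  have p4: "(4::real)^(j+Suc i) = 4^j*4*4^i" by (simp add: power_add)
  show ?thesis
    unfolding v f2 phi_def bb_def p4 of_nat_Suc
    by (rule down_aux) simp_all
qed

lemma trans_down: assumes "1 \<le> k" "k \<le> m"
  shows "bmc_trans m (m-k) * phi (m-k) = phi m * bb (k-1) / (2*real k*(real k+1))"
proof -
  obtain i where i: "k = Suc i" using assms(1) by (cases k) auto
  have m: "m = (m-k) + Suc i" using assms i by simp
  show ?thesis using trans_down_ij[of "m-k" i] m i by (metis diff_Suc_1)
qed

lemma super_eq: assumes "Suc m \<le> B"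
  shows "(\<Sum>m'\<in>{0..B}. bmc_trans m m' * phi m') = phi m * (1 - bb m / (3*(real m+1)))"
proof -
  have "(\<Sum>m'\<in>{0..B}. bmc_trans m m' * phi m') = (\<Sum>m'\<in>{0..Suc m}. bmc_trans m m' * phi m')"
    by (rule sum.mono_neutral_right) (use assms trans_zero_big in auto)
  also have "\<dots> = (\<Sum>m'<m. bmc_trans m m' * phi m') + bmc_trans m (Suc m) * phi (Suc m)"
    by (simp add: atLeast0AtMost lessThan_Suc_atMost[symmetric] trans_zero_same)
  also have "(\<Sum>m'<m. bmc_trans m m' * phi m') = (\<Sum>k\<in>{1..m}. bmc_trans m (m-k) * phi (m-k))"
    by (rule sum.reindex_bij_witness[of _ "\<lambda>m'. m - m'" "\<lambda>k. m - k"]) auto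
  also have "\<dots> = (\<Sum>k\<in>{1..m}. phi m * (bb (k-1) / (2*real k*(real k+1))))"
    by (rule sum.cong) (auto simp: trans_down)
  also have "\<dots> = phi m * (1/3 - bb m / (3*(real m+1)))"
    by (subst sum_distrib_left[symmetric]) (simp only: qsum)
  also have "bmc_trans m (Suc m) * phi (Suc m) = phi m * (2/3)"
    unfolding trans_up phi_Suc by (simp add: divide_simps; simp add: algebra_simps)
  finally show ?thesis by (simp add: algebra_simps)
qed

lemma super_le: "(\<Sum>m'\<in>{0..B}. bmc_trans m m' * phi m') \<le> phi m"
proof -
  have "(\<Sum>m'\<in>{0..B}. bmc_trans m m' * phi m') \<le> (\<Sum>m'\<in>{0..max B (Suc m)}. bmc_trans m m' * phi m')"
    by (rule sum_mono2) (auto intro!: mult_nonneg_nonneg trans_nonneg less_imp_le[OF phi_pos])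
  also have "\<dots> = phi m * (1 - bb m / (3*(real m+1)))" by (rule super_eq) simp
  also have "\<dots> \<le> phi m" using phi_pos[of m] bb_pos[of m] by (simp add: mult_le_cancel_left1)
  finally show ?thesis .
qed


lemma jensen2:
  fixes p x :: "'b \<Rightarrow> real"
  assumes "finite S" "\<And>i. i \<in> S \<Longrightarrow> p i \<ge> 0" "(\<Sum>i\<in>S. p i) = 1"
  shows "(\<Sum>i\<in>S. p i * x i)^2 \<le> (\<Sum>i\<in>S. p i * x i ^ 2)"
proof -
  define mu where "mu = (\<Sum>i\<in>S. p i * x i)"
  have "0 \<le> (\<Sum>i\<in>S. p i * (x i - mu)^2)" using assms(2) by (intro sum_nonneg) simp
  also have "\<dots> = (\<Sum>i\<in>S. p i * x i ^ 2) - 2 * mu * (\<Sum>i\<in>S. p i * x i) + mu^2 * (\<Sum>i\<in>S. p i)"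
    by (simp add: power2_eq_square algebra_simps sum.distrib sum_subtractf sum_distrib_left sum_distrib_right)
  also have "\<dots> = (\<Sum>i\<in>S. p i * x i ^ 2) - mu^2" unfolding assms(3) mu_def[symmetric] by (simp add: power2_eq_square)
  finally show ?thesis unfolding mu_def by simp
qed

lemma jensen4:
  fixes p x :: "'b \<Rightarrow> real"
  assumes "finite S" "\<And>i. i \<in> S \<Longrightarrow> p i \<ge> 0" "(\<Sum>i\<in>S. p i) = 1"
  shows "(\<Sum>i\<in>S. p i * x i)^4 \<le> (\<Sum>i\<in>S. p i * x i ^ 4)"
proof -
  have a: "(\<Sum>i\<in>S. p i * x i)^2 \<le> (\<Sum>i\<in>S. p i * x i ^ 2)" by (rule jensen2[OF assms])
  have b: "(\<Sum>i\<in>S. p i * x i ^ 2)^2 \<le> (\<Sum>i\<in>S. p i * (x i ^ 2) ^ 2)" by (rule jensen2[OF assms])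
  have "(\<Sum>i\<in>S. p i * x i)^4 = ((\<Sum>i\<in>S. p i * x i)^2)^2" by (simp flip: power_mult)
  also have "\<dots> \<le> (\<Sum>i\<in>S. p i * x i ^ 2)^2" by (rule power_mono[OF a]) simp
  also have "\<dots> \<le> (\<Sum>i\<in>S. p i * x i ^ 4)" using b by (simp flip: power_mult)
  finally show ?thesis .
qed

lemma inv_cube_step:
  fixes u v :: real
  assumes u: "0 < u" "u \<le> 1" and v: "0 < v" "v \<le> u - u^4/48"
  shows "1 / v^3 \<ge> 1 / u^3 + 1/16"
proof -
  define x where "x = u^3/48"
  have x0: "x > 0" using u by (simp add: x_def)
  have u3: "u^3 \<le> 1" using u by (simp add: power_le_one)
  have x1: "x \<le> 1/48" using u3 by (simp add: x_def)
  have vx: "v \<le> u * (1 - x)" using v by (simp add: x_def algebra_simps power3_eq_cube power4_eq_xxxx)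
  have 1: "1 - x \<ge> 0" using x1 by simp
  have "v^3 \<le> (u*(1-x))^3" by (rule power_mono[OF vx]) (use v in simp)
  also have "\<dots> = u^3 * (1-x)^3" by (simp add: power_mult_distrib)
  finally have v3: "v^3 \<le> u^3 * (1-x)^3" .
  have poly: "(1-x)^3 * (1 + 3*x) \<le> 1"
  proof -
    have "(1-x)^3 * (1 + 3*x) = 1 - x^2 * (6 - 8*x + 3*x^2)"
      by (simp add: power2_eq_square power3_eq_cube algebra_simps)
    moreover have "x^2 * (6 - 8*x + 3*x^2) \<ge> 0" using x1 x0 by (intro mult_nonneg_nonneg) auto
    ultimately show ?thesis by linarith
  qed
  have "v^3 * (1 + 3*x) \<le> u^3 * ((1-x)^3 * (1+3*x))"
    using v3 x0 by (simp add: mult_right_mono mult.assoc[symmetric])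
  also have "\<dots> \<le> u^3" using poly u by (simp add: mult_left_le)
  finally have k: "v^3 * (1 + 3*x) \<le> u^3" .
  have "1 / u^3 + 1/16 = (1 + 3*x) / u^3" using u by (simp add: x_def field_simps)
  also have "\<dots> \<le> 1 / v^3" using k u v by (simp add: divide_simps mult.commute)
  finally show ?thesis .
qed


lemma inv_phi_le: "1 / phi a \<le> sqrt (2*real a+1)"
proof -
  have "1 / phi a = (2*real a+1) * bb a" unfolding phi_bb using bb_pos[of a] by simp
  moreover have "((2*real a+1) * bb a)^2 \<le> 2*real a+1"
  proof -
    have "((2*real a+1) * bb a)^2 = (2*real a+1) * (bb a ^ 2 * (2*real a+1))"
      by (simp add: power2_eq_square)
    also have "\<dots> \<le> (2*real a+1) * 1" by (intro mult_left_mono bb_sq_upper) simp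
    finally show ?thesis by simp
  qed
  ultimately show ?thesis by (simp add: real_le_rsqrt)
qed

lemma n_powr_bound: assumes "1 \<le> n" "real n \<le> 8^(j+1)" shows "real n powr (2/3) \<le> 4^(j+1)"
proof -
  have "(real n powr (2/3))^3 = real n powr (of_nat 3 * (2/3))" by (rule powr_power) (use assms in simp)
  also have "\<dots> = real n ^ 2" using assms by simp
  also have "\<dots> \<le> (8^(j+1))^2" by (rule power_mono[OF assms(2)]) simp
  also have "\<dots> = (4^(j+1))^3"
  proof -
    have a: "((8::real)^(j+1))^2 = (8^2)^(j+1)" by (simp only: power_mult[symmetric] mult.commute)
    have b: "((4::real)^(j+1))^3 = (4^3)^(j+1)" by (simp only: power_mult[symmetric] mult.commute)
    show ?thesis unfolding a b by simp
  qed
  finally have "(real n powr (2/3)) ^ Suc 2 \<le> (4^(j+1)) ^ Suc 2" by (simp add: numeral_3_eq_3)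
  then show ?thesis by (rule power_le_imp_le_base) simp
qed

lemma bound_aux:
  fixes p U S y L c A :: real and j :: nat
  assumes "p \<le> U*S" "0 \<le> U" "U \<le> 3/2^j" "0 \<le> S" "S \<le> sqrt(2*A+1)" "A \<le> y+1"
    "y = c*4^(j+1)/L" "L > 0" "c \<ge> 0"
  shows "p \<le> 3* sqrt(8*c/L) + 3* sqrt 3/2^j"
proof -
  have y0: "y \<ge> 0" using assms by simp
  have "S \<le> sqrt(2*y+3)" using assms(5,6) by (smt (verit) real_sqrt_le_mono)
  also have "\<dots> \<le> sqrt(2*y) + sqrt 3" by (rule sqrt_add_le_add_sqrt) (use y0 in auto)
  finally have S: "S \<le> sqrt(2*y) + sqrt 3" .
  have "p \<le> U*S" by fact
  also have "\<dots> \<le> (3/2^j) * (sqrt(2*y) + sqrt 3)"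
    by (rule mult_mono[OF assms(3) S]) (use assms in auto)
  also have "\<dots> = 3 * (sqrt(2*y) / 2^j) + 3* sqrt 3/2^j" by (simp add: algebra_simps)
  also have "sqrt(2*y) / 2^j = sqrt(8*c/L)"
  proof -
    have "sqrt ((4::real)^j) = 2^j"
      by (metis power_mult_distrib real_sqrt_abs2 abs_of_nonneg zero_le_power zero_le_numeral real_sqrt_power power2_eq_square mult_2 numeral_Bit0 real_sqrt_four)
    then have "sqrt(2*y) / 2^j = sqrt(2*y / 4^j)" by (simp add: real_sqrt_divide)
    also have "2*y / 4^j = 8*c/L" using assms(7,8) by (simp add: field_simps)
    finally show ?thesis .
  qed
  finally show ?thesis .
qed

lemma sqrt_L: assumes "j \<ge> 1" "e > 0" "c \<ge> 0"
  shows "sqrt(8*c/((real j * ln 8) powr (2+e))) = sqrt(8*c) / (ln 8 powr (1+e/2)) * real j powr (-(1+e/2))"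
proof -
  have l8: "ln (8::real) > 0" by simp
  have jl: "real j * ln 8 > 0" using assms l8 by simp
  have "sqrt ((real j * ln 8) powr (2+e)) = ((real j * ln 8) powr (2+e)) powr (1/2)"
    by (simp add: powr_half_sqrt)
  also have "\<dots> = (real j * ln 8) powr (1+e/2)"
  proof -
    have eq: "(2+e)*(1/2) = 1+e/2" by simp
    show ?thesis by (simp only: powr_powr eq)
  qed
  also have "\<dots> = real j powr (1+e/2) * ln 8 powr (1+e/2)" by (simp only: powr_mult)
  finally have s: "sqrt ((real j * ln 8) powr (2+e)) = real j powr (1+e/2) * ln 8 powr (1+e/2)" .
  have "sqrt(8*c/((real j * ln 8) powr (2+e))) = sqrt(8*c) / sqrt ((real j * ln 8) powr (2+e))"
    by (rule real_sqrt_divide)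
  also have "\<dots> = sqrt(8*c) / (real j powr (1+e/2) * ln 8 powr (1+e/2))" by (simp only: s)
  also have "\<dots> = sqrt(8*c) / (ln 8 powr (1+e/2)) * real j powr (-(1+e/2))"
  proof -
    have m: "real j powr (-(1+e/2)) = inverse (real j powr (1+e/2))" by (rule powr_minus)
    have p1: "real j powr (1+e/2) > 0" using assms by simp
    have p2: "ln 8 powr (1+e/2) > 0" using l8 by simp
    show ?thesis unfolding m by (simp only: divide_inverse inverse_mult_distrib mult_ac)
  qed
  finally show ?thesis .
qed

lemma summable_g: assumes "e > 0"
  shows "summable (\<lambda>j. K1 * real j powr (-(1+e/2)) + K2 * (1/2::real)^j)"
proof (rule summable_add)
  show "summable (\<lambda>j. K1 * real j powr (-(1+e/2)))"
    by (rule summable_mult) (subst summable_real_powr_iff, use assms in simp)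
  show "summable (\<lambda>j. K2 * (1/2::real)^j)"
    by (rule summable_mult) (rule summable_geometric, simp)
qed


locale bmc = prob_space M for M :: "'a measure" +
  fixes X :: "nat \<Rightarrow> 'a \<Rightarrow> nat" and m0 :: nat
  assumes meas[measurable]: "\<And>n. X n \<in> measurable M (count_space UNIV)"
    and init: "prob {\<omega> \<in> space M. X 0 \<omega> = m0} = 1"
    and recur: "\<And>n s. prob {\<omega> \<in> space M. \<forall>i\<le>Suc n. X i \<omega> = s i} =
        prob {\<omega> \<in> space M. \<forall>i\<le>n. X i \<omega> = s i} * bmc_trans (s n) (s (Suc n))"
begin

definition C :: "nat \<Rightarrow> (nat \<Rightarrow> nat) \<Rightarrow> 'a set" where
  "C n s = {\<omega> \<in> space M. \<forall>i\<le>n. X i \<omega> = s i}"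

definition mu :: "nat \<Rightarrow> (nat \<Rightarrow> nat) \<Rightarrow> real" where
  "mu n s = prob (C n s)"

lemma C_sets[measurable]: "C n s \<in> events"
  unfolding C_def by measurable

lemma C_cong: "(\<And>i. i \<le> n \<Longrightarrow> s i = t i) \<Longrightarrow> C n s = C n t"
  unfolding C_def by auto

lemma mu_cong: "(\<And>i. i \<le> n \<Longrightarrow> s i = t i) \<Longrightarrow> mu n s = mu n t"
  unfolding mu_def using C_cong by metis

lemma mu_0: "mu 0 s = (if s 0 = m0 then 1 else 0)"
proof -
  have c: "C 0 s = {\<omega> \<in> space M. X 0 \<omega> = s 0}" unfolding C_def by auto
  show ?thesis
  proof (cases "s 0 = m0")
    case True then show ?thesis using init unfolding mu_def c by simp
  next
    case False
    have ev: "{\<omega> \<in> space M. X 0 \<omega> = m0} \<in> events" by measurable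
    have "C 0 s \<subseteq> space M - {\<omega> \<in> space M. X 0 \<omega> = m0}" unfolding c using False by auto
    hence "prob (C 0 s) \<le> prob (space M - {\<omega> \<in> space M. X 0 \<omega> = m0})"
      by (intro finite_measure_mono) (use ev in auto)
    also have "\<dots> = 0" using prob_compl[OF ev] init by simp
    finally show ?thesis using False unfolding mu_def by (simp add: measure_nonneg antisym)
  qed
qed

lemma mu_Suc: "mu (Suc n) s = mu n s * bmc_trans (s n) (s (Suc n))"
  unfolding mu_def C_def by (rule recur)

lemma mu_formula: "mu n s = (if s 0 = m0 then 1 else 0) * (\<Prod>i<n. bmc_trans (s i) (s (Suc i)))"
  by (induction n) (simp_all add: mu_0 mu_Suc)

lemma trans_nz: "bmc_trans m m' \<noteq> 0 \<Longrightarrow> m' \<le> Suc m"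
  using trans_zero_big[of m m'] by (cases "m' \<le> Suc m") auto

lemma mu_nz_bound: assumes "mu n s \<noteq> 0" "i \<le> n" shows "s i \<le> m0 + i"
proof -
  have s0: "s 0 = m0" and pr: "(\<Prod>i<n. bmc_trans (s i) (s (Suc i))) \<noteq> 0"
    using assms(1) unfolding mu_formula by (auto split: if_splits)
  have t: "\<And>i. i < n \<Longrightarrow> bmc_trans (s i) (s (Suc i)) \<noteq> 0" using pr by auto
  show ?thesis using assms(2)
  proof (induction i)
    case 0 then show ?case using s0 by simp
  next
    case (Suc i) then show ?case using trans_nz[OF t[of i]] by simp
  qed
qed

lemma mu_zero_big: assumes "i \<le> n" "s i > m0 + n" shows "mu n s = 0"
proof (rule ccontr)
  assume "mu n s \<noteq> 0"
  from mu_nz_bound[OF this assms(1)] assms show False by linarith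
qed

lemma C_null: "i \<le> n \<Longrightarrow> s i > m0 + n \<Longrightarrow> C n s \<in> null_sets M"
  using mu_zero_big[of i n s] unfolding mu_def
  by (simp add: emeasure_eq_measure null_sets_def)

definition Paths :: "nat \<Rightarrow> nat \<Rightarrow> (nat \<Rightarrow> nat) set" where
  "Paths n B = PiE {0..n} (\<lambda>_. {0..B})"

lemma Paths_finite: "finite (Paths n B)"
  unfolding Paths_def by (intro finite_PiE) auto

lemma Bad_null: assumes "m0 + n \<le> B"
  shows "{\<omega> \<in> space M. \<exists>i\<le>n. X i \<omega> > B} \<in> null_sets M"
proof -
  let ?S = "{s \<in> PiE {0..n} (\<lambda>_. UNIV). \<exists>i\<le>n. s i > B}"
  have cS: "countable ?S"
    by (rule countable_subset[OF _ countable_PiE[of "{0..n}" "\<lambda>_. UNIV :: nat set"]]) auto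
  have un: "(\<Union>s\<in>?S. C n s) \<in> null_sets M"
  proof (rule null_sets_UN'[OF cS])
    fix s assume "s \<in> ?S"
    then obtain i where "i \<le> n" "s i > B" by blast
    then show "C n s \<in> null_sets M" using assms by (intro C_null[of i]) auto
  qed
  have sub: "{\<omega> \<in> space M. \<exists>i\<le>n. X i \<omega> > B} \<subseteq> (\<Union>s\<in>?S. C n s)"
  proof
    fix \<omega> assume w: "\<omega> \<in> {\<omega> \<in> space M. \<exists>i\<le>n. X i \<omega> > B}"
    let ?s = "restrict (\<lambda>i. X i \<omega>) {0..n}"
    have "?s \<in> ?S" using w by auto
    moreover have "\<omega> \<in> C n ?s" using w unfolding C_def by auto
    ultimately show "\<omega> \<in> (\<Union>s\<in>?S. C n s)" by blast
  qed
  have ev: "{\<omega> \<in> space M. \<exists>i\<le>n. X i \<omega> > B} \<in> events" by measurable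
  show ?thesis by (rule null_sets_subset[OF un ev sub])
qed

end

context bmc begin

definition dep :: "nat \<Rightarrow> ((nat \<Rightarrow> nat) \<Rightarrow> bool) \<Rightarrow> bool" where
  "dep n Q \<longleftrightarrow> (\<forall>s t. (\<forall>i\<le>n. s i = t i) \<longrightarrow> Q s = Q t)"

lemma dep_eq: assumes "dep n Q" "\<forall>i\<le>n. s i = t i" shows "Q s = Q t"
proof -
  have "\<forall>s t. (\<forall>i\<le>n. s i = t i) \<longrightarrow> Q s = Q t" using assms(1) unfolding dep_def .
  then show ?thesis using assms(2) by meson
qed

lemma C_disj: "disjoint_family_on (C n) (Paths n B)"
unfolding disjoint_family_on_def proof (intro ballI impI)
  fix s t assume st: "s \<in> Paths n B" "t \<in> Paths n B" "s \<noteq> t"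
  then obtain i where i: "i \<in> {0..n}" "s i \<noteq> t i" unfolding Paths_def
    by (metis PiE_ext)
  then show "C n s \<inter> C n t = {}" unfolding C_def by auto
qed

lemma PS_sets: assumes "dep n Q" shows "{\<omega> \<in> space M. Q (\<lambda>i. X i \<omega>)} \<in> events"
proof -
  let ?S = "{s \<in> PiE {0..n} (\<lambda>_. UNIV). Q s}"
  have cS: "countable ?S"
    by (rule countable_subset[OF _ countable_PiE[of "{0..n}" "\<lambda>_. UNIV :: nat set"]]) auto
  have eq: "{\<omega> \<in> space M. Q (\<lambda>i. X i \<omega>)} = (\<Union>s\<in>?S. C n s)"
  proof (intro set_eqI iffI)
    fix \<omega> assume w: "\<omega> \<in> {\<omega> \<in> space M. Q (\<lambda>i. X i \<omega>)}"
    let ?s = "restrict (\<lambda>i. X i \<omega>) {0..n}"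
    have "Q ?s = Q (\<lambda>i. X i \<omega>)" by (rule dep_eq[OF assms(1)]) simp
    then have "?s \<in> ?S" using w by auto
    moreover have "\<omega> \<in> C n ?s" using w unfolding C_def by auto
    ultimately show "\<omega> \<in> (\<Union>s\<in>?S. C n s)" by blast
  next
    fix \<omega> assume "\<omega> \<in> (\<Union>s\<in>?S. C n s)"
    then obtain s where s: "s \<in> ?S" "\<omega> \<in> C n s" by blast
    have "\<forall>i\<le>n. X i \<omega> = s i" using s unfolding C_def by auto
    then have "Q (\<lambda>i. X i \<omega>) = Q s" by (rule dep_eq[OF assms(1)])
    then show "\<omega> \<in> {\<omega> \<in> space M. Q (\<lambda>i. X i \<omega>)}" using s unfolding C_def by auto
  qed
  show ?thesis unfolding eq by (rule sets.countable_UN'[OF cS]) auto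
qed

lemma PS: assumes "dep n Q" "m0 + n \<le> B"
  shows "prob {\<omega> \<in> space M. Q (\<lambda>i. X i \<omega>)} = (\<Sum>s\<in>Paths n B. if Q s then mu n s else 0)"
proof -
  let ?E = "{\<omega> \<in> space M. Q (\<lambda>i. X i \<omega>)}"
  let ?T = "{s \<in> Paths n B. Q s}"
  let ?U = "(\<Union>s\<in>?T. C n s)"
  let ?Bad = "{\<omega> \<in> space M. \<exists>i\<le>n. X i \<omega> > B}"
  have Ev: "?E \<in> events" by (rule PS_sets[OF assms(1)])
  have Bn: "?Bad \<in> null_sets M" by (rule Bad_null[OF assms(2)])
  have fT: "finite ?T" using Paths_finite by auto
  have Uev: "?U \<in> events" using fT by (intro sets.finite_UN) auto
  have pU: "prob ?U = (\<Sum>s\<in>?T. mu n s)"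
    unfolding mu_def
    by (rule measure_finite_Union[OF fT]) (auto intro: disjoint_family_on_mono[OF _ C_disj[of n B]] simp: emeasure_eq_measure)
  have sub1: "?U \<subseteq> ?E"
  proof
    fix \<omega> assume "\<omega> \<in> ?U"
    then obtain s where s: "s \<in> ?T" "\<omega> \<in> C n s" by blast
    have "\<forall>i\<le>n. X i \<omega> = s i" using s unfolding C_def by auto
    then have "Q (\<lambda>i. X i \<omega>) = Q s" by (rule dep_eq[OF assms(1)])
    then show "\<omega> \<in> ?E" using s unfolding C_def by auto
  qed
  have sub2: "?E \<subseteq> ?U \<union> ?Bad"
  proof
    fix \<omega> assume w: "\<omega> \<in> ?E"
    show "\<omega> \<in> ?U \<union> ?Bad"
    proof (cases "\<omega> \<in> ?Bad")
      case False
      let ?s = "restrict (\<lambda>i. X i \<omega>) {0..n}"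
      have "Q ?s = Q (\<lambda>i. X i \<omega>)" by (rule dep_eq[OF assms(1)]) simp
      moreover have "?s \<in> Paths n B" using False w unfolding Paths_def by (auto simp: not_less)
      ultimately have "?s \<in> ?T" using w by auto
      moreover have "\<omega> \<in> C n ?s" using w unfolding C_def by auto
      ultimately show ?thesis by blast
    qed simp
  qed
  have "prob ?U \<le> prob ?E" by (rule finite_measure_mono[OF sub1 Ev])
  moreover have "prob ?E \<le> prob (?U \<union> ?Bad)" by (rule finite_measure_mono[OF sub2]) (use Uev Bn in auto)
  moreover have "prob (?U \<union> ?Bad) = prob ?U" by (rule measure_Un_null_set[OF Uev Bn])
  ultimately have "prob ?E = prob ?U" by linarith
  also have "\<dots> = (\<Sum>s\<in>Paths n B. if Q s then mu n s else 0)"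
    unfolding pU by (simp add: sum.inter_filter[OF Paths_finite, symmetric])
  finally show ?thesis .
qed

end

context bmc begin

definition pX :: "nat \<Rightarrow> nat \<Rightarrow> real" where
  "pX n m = prob {\<omega> \<in> space M. X n \<omega> = m}"

lemma dep_mono: "dep n Q \<Longrightarrow> n \<le> n' \<Longrightarrow> dep n' Q"
  unfolding dep_def by (meson order_trans)

lemma dep_coord: "i \<le> n \<Longrightarrow> dep n (\<lambda>s. P (s i))"
  unfolding dep_def by auto

lemma dep_conj: "dep n P \<Longrightarrow> dep n Q \<Longrightarrow> dep n (\<lambda>s. P s \<and> Q s)"
  using dep_eq unfolding dep_def by meson

lemma dep_true: "dep n (\<lambda>s. True)" unfolding dep_def by simp

lemma Paths_mem: "s \<in> Paths n B \<Longrightarrow> i \<le> n \<Longrightarrow> s i \<le> B"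
  unfolding Paths_def by auto

lemma sum_delta_path: fixes a :: real and c :: "nat \<Rightarrow> real" assumes "s \<in> Paths n B"
  shows "(\<Sum>m\<in>{0..B}. (if Q s \<and> s n = m then a else 0) * c m) = (if Q s then a * c (s n) else 0)"
proof -
  have "(\<Sum>m\<in>{0..B}. (if Q s \<and> s n = m then a else 0) * c m) = (\<Sum>m\<in>{0..B}. if s n = m then (if Q s then a * c m else 0) else 0)"
    by (rule sum.cong) auto
  also have "\<dots> = (if Q s then a * c (s n) else 0)" using Paths_mem[OF assms, of n] by simp
  finally show ?thesis .
qed

lemma pX_PS: "m0 + n \<le> B \<Longrightarrow> pX n m = (\<Sum>s\<in>Paths n B. if s n = m then mu n s else 0)"
  unfolding pX_def using PS[of n "\<lambda>s. s n = m" B] dep_coord[of n n "\<lambda>x. x = m"] by simp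

lemma pX_zero: "m > m0 + n \<Longrightarrow> pX n m = 0"
  unfolding pX_PS[OF order_refl] by (intro sum.neutral) (auto dest: Paths_mem[of _ n _ n])

lemma pX_nonneg: "pX n m \<ge> 0" unfolding pX_def by simp

lemma FA: assumes "dep n Q" "m0 + n \<le> B"
  shows "prob {\<omega> \<in> space M. Q (\<lambda>i. X i \<omega>)} = (\<Sum>m\<in>{0..B}. prob {\<omega> \<in> space M. Q (\<lambda>i. X i \<omega>) \<and> X n \<omega> = m})"
proof -
  have "(\<Sum>m\<in>{0..B}. prob {\<omega> \<in> space M. Q (\<lambda>i. X i \<omega>) \<and> X n \<omega> = m})
      = (\<Sum>m\<in>{0..B}. \<Sum>s\<in>Paths n B. (if Q s \<and> s n = m then mu n s else 0) * 1)"
  proof (rule sum.cong[OF refl])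
    fix m
    have d: "dep n (\<lambda>s. Q s \<and> s n = m)" by (rule dep_conj[OF assms(1) dep_coord]) simp
    show "prob {\<omega> \<in> space M. Q (\<lambda>i. X i \<omega>) \<and> X n \<omega> = m} = (\<Sum>s\<in>Paths n B. (if Q s \<and> s n = m then mu n s else 0) * 1)"
      using PS[OF d assms(2)] by simp
  qed
  also have "\<dots> = (\<Sum>s\<in>Paths n B. \<Sum>m\<in>{0..B}. (if Q s \<and> s n = m then mu n s else 0) * 1)"
    by (rule sum.swap)
  also have "\<dots> = (\<Sum>s\<in>Paths n B. if Q s then mu n s else 0)"
    by (rule sum.cong[OF refl]) (subst sum_delta_path, auto)
  also have "\<dots> = prob {\<omega> \<in> space M. Q (\<lambda>i. X i \<omega>)}" by (rule PS[OF assms, symmetric])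
  finally show ?thesis by simp
qed

lemma Paths_Suc: "Paths (Suc n) B = (\<lambda>(y, g). g(Suc n := y)) ` ({0..B} \<times> Paths n B)"
proof -
  have "{0..Suc n} = insert (Suc n) {0..n}" by auto
  then show ?thesis unfolding Paths_def by (simp add: PiE_insert_eq)
qed

lemma sum_Paths_Suc:
  "(\<Sum>s\<in>Paths (Suc n) B. f s) = (\<Sum>g\<in>Paths n B. \<Sum>y\<in>{0..B}. f (g(Suc n := y)))"
proof -
  have inj: "inj_on (\<lambda>(y, g). g(Suc n := y)) ({0..B} \<times> Paths n B)"
    unfolding Paths_def by (rule inj_combinator) simp
  have "(\<Sum>s\<in>Paths (Suc n) B. f s) = (\<Sum>(y,g)\<in>{0..B} \<times> Paths n B. f (g(Suc n := y)))"
    unfolding Paths_Suc by (subst sum.reindex[OF inj]) (simp add: case_prod_unfold)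
  also have "\<dots> = (\<Sum>y\<in>{0..B}. \<Sum>g\<in>Paths n B. f (g(Suc n := y)))"
    by (rule sum.cartesian_product[symmetric])
  also have "\<dots> = (\<Sum>g\<in>Paths n B. \<Sum>y\<in>{0..B}. f (g(Suc n := y)))"
    by (rule sum.swap)
  finally show ?thesis .
qed

lemma GM: assumes "dep n Q" "m0 + Suc n \<le> B" "m' \<le> B"
  shows "prob {\<omega> \<in> space M. Q (\<lambda>i. X i \<omega>) \<and> X (Suc n) \<omega> = m'}
       = (\<Sum>m\<in>{0..B}. prob {\<omega> \<in> space M. Q (\<lambda>i. X i \<omega>) \<and> X n \<omega> = m} * bmc_trans m m')"
proof -
  have d1: "dep (Suc n) (\<lambda>s. Q s \<and> s (Suc n) = m')"
    by (rule dep_conj[OF dep_mono[OF assms(1)] dep_coord]) auto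
  have B1: "m0 + n \<le> B" using assms(2) by simp
  have "prob {\<omega> \<in> space M. Q (\<lambda>i. X i \<omega>) \<and> X (Suc n) \<omega> = m'}
      = (\<Sum>s\<in>Paths (Suc n) B. if Q s \<and> s (Suc n) = m' then mu (Suc n) s else 0)"
    using PS[OF d1 assms(2)] by simp
  also have "\<dots> = (\<Sum>g\<in>Paths n B. \<Sum>y\<in>{0..B}. if Q (g(Suc n := y)) \<and> y = m' then mu (Suc n) (g(Suc n := y)) else 0)"
    by (subst sum_Paths_Suc) simp
  also have "\<dots> = (\<Sum>g\<in>Paths n B. \<Sum>y\<in>{0..B}. if y = m' then (if Q g then mu n g * bmc_trans (g n) y else 0) else 0)"
  proof (intro sum.cong refl)
    fix g y
    have q: "Q (g(Suc n := y)) = Q g" by (rule dep_eq[OF assms(1)]) simp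
    have mu: "mu (Suc n) (g(Suc n := y)) = mu n g * bmc_trans (g n) y"
      unfolding mu_Suc by (simp add: mu_cong[of n "g(Suc n := y)" g])
    show "(if Q (g(Suc n := y)) \<and> y = m' then mu (Suc n) (g(Suc n := y)) else 0)
       = (if y = m' then (if Q g then mu n g * bmc_trans (g n) y else 0) else 0)"
      unfolding q mu by simp
  qed
  also have "\<dots> = (\<Sum>g\<in>Paths n B. if Q g then mu n g * bmc_trans (g n) m' else 0)"
    using assms(3) by (simp add: sum.delta')
  also have "\<dots> = (\<Sum>g\<in>Paths n B. \<Sum>m\<in>{0..B}. (if Q g \<and> g n = m then mu n g else 0) * bmc_trans m m')"
    by (rule sum.cong[OF refl]) (subst sum_delta_path, auto)
  also have "\<dots> = (\<Sum>m\<in>{0..B}. \<Sum>g\<in>Paths n B. (if Q g \<and> g n = m then mu n g else 0) * bmc_trans m m')"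
    by (rule sum.swap)
  also have "\<dots> = (\<Sum>m\<in>{0..B}. prob {\<omega> \<in> space M. Q (\<lambda>i. X i \<omega>) \<and> X n \<omega> = m} * bmc_trans m m')"
  proof (rule sum.cong[OF refl])
    fix m
    have d: "dep n (\<lambda>s. Q s \<and> s n = m)" by (rule dep_conj[OF assms(1) dep_coord]) simp
    show "(\<Sum>g\<in>Paths n B. (if Q g \<and> g n = m then mu n g else 0) * bmc_trans m m') = prob {\<omega> \<in> space M. Q (\<lambda>i. X i \<omega>) \<and> X n \<omega> = m} * bmc_trans m m'"
      using PS[OF d B1] by (simp add: sum_distrib_right)
  qed
  finally show ?thesis .
qed

end

context bmc begin

definition u :: "nat \<Rightarrow> real" where
  "u n = (\<Sum>m\<in>{0..m0+n}. pX n m * phi m)"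

lemma pX_sum_B: "m0 + n \<le> B \<Longrightarrow> (\<Sum>m\<in>{0..B}. pX n m * f m) = (\<Sum>m\<in>{0..m0+n}. pX n m * f m)"
  by (rule sum.mono_neutral_right) (auto simp: pX_zero)

lemma pX_total: "(\<Sum>m\<in>{0..m0+n}. pX n m) = 1"
proof -
  have "prob {\<omega> \<in> space M. True} = (\<Sum>m\<in>{0..m0+n}. prob {\<omega> \<in> space M. True \<and> X n \<omega> = m})"
    by (rule FA[of n "\<lambda>s. True"]) (auto simp: dep_true)
  then show ?thesis unfolding pX_def using prob_space by simp
qed

lemma pX_rec: assumes "m0 + Suc n \<le> B" "m' \<le> B"
  shows "pX (Suc n) m' = (\<Sum>m\<in>{0..B}. pX n m * bmc_trans m m')"
  using GM[of n "\<lambda>s. True" B m'] assms unfolding pX_def by (simp add: dep_true)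

lemma u_lower: "u n \<ge> phi (m0+n)"
proof -
  have "phi (m0+n) = (\<Sum>m\<in>{0..m0+n}. pX n m * phi (m0+n))"
    by (simp add: sum_distrib_right[symmetric] pX_total)
  also have "\<dots> \<le> u n" unfolding u_def
    by (intro sum_mono mult_left_mono phi_antimono) (auto simp: pX_nonneg)
  finally show ?thesis .
qed

lemma u_pos: "u n > 0" using u_lower[of n] phi_pos[of "m0+n"] by linarith

lemma u_le1: "u n \<le> 1"
proof -
  have "u n \<le> (\<Sum>m\<in>{0..m0+n}. pX n m * 1)" unfolding u_def
    by (intro sum_mono mult_left_mono phi_le1) (auto simp: pX_nonneg)
  then show ?thesis using pX_total[of n] by simp
qed

lemma u_step: "u (Suc n) \<le> u n - u n ^ 4 / 48"
proof -
  define B where "B = m0 + Suc n"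
  have "u (Suc n) = (\<Sum>m'\<in>{0..B}. pX (Suc n) m' * phi m')" unfolding u_def B_def by simp
  also have "\<dots> = (\<Sum>m'\<in>{0..B}. \<Sum>m\<in>{0..B}. pX n m * bmc_trans m m' * phi m')"
  proof (rule sum.cong[OF refl])
    fix m' assume "m' \<in> {0..B}"
    then have "pX (Suc n) m' = (\<Sum>m\<in>{0..B}. pX n m * bmc_trans m m')"
      by (intro pX_rec) (auto simp: B_def)
    then show "pX (Suc n) m' * phi m' = (\<Sum>m\<in>{0..B}. pX n m * bmc_trans m m' * phi m')"
      by (simp add: sum_distrib_right)
  qed
  also have "\<dots> = (\<Sum>m\<in>{0..B}. pX n m * (\<Sum>m'\<in>{0..B}. bmc_trans m m' * phi m'))"
    by (subst sum.swap) (simp add: sum_distrib_left mult.assoc)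
  also have "\<dots> = (\<Sum>m\<in>{0..m0+n}. pX n m * (\<Sum>m'\<in>{0..B}. bmc_trans m m' * phi m'))"
    by (rule pX_sum_B) (simp add: B_def)
  also have "\<dots> = (\<Sum>m\<in>{0..m0+n}. pX n m * (phi m * (1 - bb m / (3*(real m+1)))))"
    by (rule sum.cong[OF refl]) (subst super_eq, auto simp: B_def)
  also have "\<dots> \<le> (\<Sum>m\<in>{0..m0+n}. pX n m * (phi m - phi m ^ 4 / 48))"
  proof (intro sum_mono mult_left_mono)
    fix m
    have "phi m * (phi m ^ 3 / 48) \<le> phi m * (bb m / (3*(real m+1)))"
      by (rule mult_left_mono[OF D_lower]) (use phi_pos[of m] in simp)
    then show "phi m * (1 - bb m / (3*(real m+1))) \<le> phi m - phi m ^ 4 / 48"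
      by (simp add: algebra_simps power3_eq_cube power4_eq_xxxx)
  qed (simp add: pX_nonneg)
  also have "\<dots> = u n - (\<Sum>m\<in>{0..m0+n}. pX n m * phi m ^ 4) / 48"
    unfolding u_def by (simp add: algebra_simps sum_subtractf sum_divide_distrib)
  also have "\<dots> \<le> u n - u n ^ 4 / 48"
  proof -
    have "u n ^ 4 \<le> (\<Sum>m\<in>{0..m0+n}. pX n m * phi m ^ 4)"
      unfolding u_def by (rule jensen4) (auto simp: pX_nonneg pX_total)
    then show ?thesis by simp
  qed
  finally show ?thesis .
qed

lemma u_inv: "1 / u n ^ 3 \<ge> real n / 16"
proof (induction n)
  case 0 then show ?case using u_pos[of 0] by simp
next
  case (Suc n)
  have "1 / u (Suc n) ^ 3 \<ge> 1 / u n ^ 3 + 1/16"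
    by (rule inv_cube_step) (use u_pos u_le1 u_step in auto)
  then show ?case using Suc by simp
qed

lemma u_cube: "n \<ge> 1 \<Longrightarrow> u n ^ 3 \<le> 16 / real n"
proof -
  assume n: "n \<ge> 1"
  have p: "u n ^ 3 > 0" using u_pos[of n] by simp
  have "real n / 16 \<le> 1 / u n ^ 3" by (rule u_inv)
  then show ?thesis using p n by (simp add: divide_simps mult.commute)
qed

end


definition NH :: "nat \<Rightarrow> nat \<Rightarrow> nat \<Rightarrow> (nat \<Rightarrow> nat) \<Rightarrow> bool" where
  "NH N a k s \<longleftrightarrow> (\<forall>t. N \<le> t \<and> t \<le> N + k \<longrightarrow> a < s t)"

lemma NH_0: "NH N a 0 s = (a < s N)"
  unfolding NH_def by (metis add_0_right le_antisym order_refl)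

lemma NH_Suc: "NH N a (Suc k) s = (NH N a k s \<and> a < s (Suc (N + k)))"
  unfolding NH_def by (auto simp: le_Suc_eq)

context bmc begin

lemma dep_NH: "dep (N + k) (NH N a k)"
  unfolding dep_def NH_def by auto

definition W :: "nat \<Rightarrow> nat \<Rightarrow> nat \<Rightarrow> nat \<Rightarrow> real" where
  "W N a k m = prob {\<omega> \<in> space M. NH N a k (\<lambda>i. X i \<omega>) \<and> X (N + k) \<omega> = m}"

definition H :: "nat \<Rightarrow> nat \<Rightarrow> nat \<Rightarrow> real" where
  "H N a k = prob {\<omega> \<in> space M. \<not> NH N a k (\<lambda>i. X i \<omega>)}"

definition Lam :: "nat \<Rightarrow> nat \<Rightarrow> nat \<Rightarrow> nat \<Rightarrow> real" where
  "Lam BB N a k = (\<Sum>m\<in>{0..BB}. W N a k m * phi m) + phi a * H N a k"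

lemma W_nonneg: "W N a k m \<ge> 0" unfolding W_def by simp

lemma dep_not: "dep n Q \<Longrightarrow> dep n (\<lambda>s. \<not> Q s)"
  unfolding dep_def by simp

lemma Lam_0: assumes "m0 + N \<le> BB" shows "Lam BB N a 0 \<le> u N"
proof -
  have W0: "W N a 0 m = (if a < m then pX N m else 0)" for m
  proof -
    have "{\<omega> \<in> space M. NH N a 0 (\<lambda>i. X i \<omega>) \<and> X (N + 0) \<omega> = m} = (if a < m then {\<omega> \<in> space M. X N \<omega> = m} else {})"
      unfolding NH_0 by auto
    then show ?thesis unfolding W_def pX_def by simp
  qed
  have H0: "H N a 0 = (\<Sum>m\<in>{0..BB}. (if m \<le> a then pX N m else 0))"
  proof -
    have d: "dep N (\<lambda>s. \<not> NH N a 0 s)" using dep_not[OF dep_NH[of N 0 a]] by simp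
    have "H N a 0 = (\<Sum>m\<in>{0..BB}. prob {\<omega> \<in> space M. \<not> NH N a 0 (\<lambda>i. X i \<omega>) \<and> X N \<omega> = m})"
      unfolding H_def by (rule FA[OF d assms])
    also have "\<dots> = (\<Sum>m\<in>{0..BB}. (if m \<le> a then pX N m else 0))"
    proof (rule sum.cong[OF refl])
      fix m
      have "{\<omega> \<in> space M. \<not> NH N a 0 (\<lambda>i. X i \<omega>) \<and> X N \<omega> = m} = (if m \<le> a then {\<omega> \<in> space M. X N \<omega> = m} else {})"
        unfolding NH_0 by auto
      then show "prob {\<omega> \<in> space M. \<not> NH N a 0 (\<lambda>i. X i \<omega>) \<and> X N \<omega> = m} = (if m \<le> a then pX N m else 0)"
        unfolding pX_def by simp
    qed
    finally show ?thesis .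
  qed
  have "Lam BB N a 0 = (\<Sum>m\<in>{0..BB}. pX N m * (if a < m then phi m else phi a))"
    unfolding Lam_def W0 H0 sum_distrib_left sum.distrib[symmetric] by (rule sum.cong) auto
  also have "\<dots> \<le> (\<Sum>m\<in>{0..BB}. pX N m * phi m)"
    by (intro sum_mono mult_left_mono) (auto simp: pX_nonneg intro: phi_antimono)
  also have "\<dots> = u N" unfolding u_def by (rule pX_sum_B[OF assms])
  finally show ?thesis .
qed

lemma Lam_step: assumes "m0 + Suc (N + k) \<le> BB" shows "Lam BB N a (Suc k) \<le> Lam BB N a k"
proof -
  define G where "G m' = prob {\<omega> \<in> space M. NH N a k (\<lambda>i. X i \<omega>) \<and> X (Suc (N + k)) \<omega> = m'}" for m'
  have G: "G m' = (\<Sum>m\<in>{0..BB}. W N a k m * bmc_trans m m')" if "m' \<le> BB" for m'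
    unfolding G_def W_def by (rule GM[OF dep_NH assms that])
  have G_nonneg: "G m' \<ge> 0" for m' unfolding G_def by simp
  have Wsuc: "W N a (Suc k) m' = (if a < m' then G m' else 0)" for m'
  proof -
    have "{\<omega> \<in> space M. NH N a (Suc k) (\<lambda>i. X i \<omega>) \<and> X (N + Suc k) \<omega> = m'} =
      (if a < m' then {\<omega> \<in> space M. NH N a k (\<lambda>i. X i \<omega>) \<and> X (Suc (N + k)) \<omega> = m'} else {})"
      unfolding NH_Suc by auto
    then show ?thesis unfolding W_def G_def by simp
  qed
  have Hsuc: "H N a (Suc k) = H N a k + (\<Sum>m'\<in>{0..BB}. if m' \<le> a then G m' else 0)"
  proof -
    let ?A = "{\<omega> \<in> space M. \<not> NH N a k (\<lambda>i. X i \<omega>)}"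
    let ?B = "{\<omega> \<in> space M. NH N a k (\<lambda>i. X i \<omega>) \<and> \<not> a < X (Suc (N + k)) \<omega>}"
    have dA: "dep (N + k) (\<lambda>s. \<not> NH N a k s)" by (rule dep_not[OF dep_NH])
    have dB: "dep (Suc (N + k)) (\<lambda>s. NH N a k s \<and> \<not> a < s (Suc (N + k)))"
      by (rule dep_conj[OF dep_mono[OF dep_NH] dep_coord]) auto
    have Aev: "?A \<in> events" by (rule PS_sets[OF dA])
    have Bev: "?B \<in> events" using PS_sets[OF dB] by simp
    have un: "{\<omega> \<in> space M. \<not> NH N a (Suc k) (\<lambda>i. X i \<omega>)} = ?A \<union> ?B"
      unfolding NH_Suc by auto
    have "H N a (Suc k) = prob ?A + prob ?B"
      unfolding H_def un by (rule finite_measure_Union[OF Aev Bev]) auto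
    also have "prob ?B = (\<Sum>m'\<in>{0..BB}. prob {\<omega> \<in> space M. (NH N a k (\<lambda>i. X i \<omega>) \<and> \<not> a < X (Suc (N + k)) \<omega>) \<and> X (Suc (N + k)) \<omega> = m'})"
      using FA[OF dB assms] by simp
    also have "\<dots> = (\<Sum>m'\<in>{0..BB}. if m' \<le> a then G m' else 0)"
    proof (rule sum.cong[OF refl])
      fix m'
      have "{\<omega> \<in> space M. (NH N a k (\<lambda>i. X i \<omega>) \<and> \<not> a < X (Suc (N + k)) \<omega>) \<and> X (Suc (N + k)) \<omega> = m'}
        = (if m' \<le> a then {\<omega> \<in> space M. NH N a k (\<lambda>i. X i \<omega>) \<and> X (Suc (N + k)) \<omega> = m'} else {})"
        by auto
      then show "prob {\<omega> \<in> space M. (NH N a k (\<lambda>i. X i \<omega>) \<and> \<not> a < X (Suc (N + k)) \<omega>) \<and> X (Suc (N + k)) \<omega> = m'}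
          = (if m' \<le> a then G m' else 0)" unfolding G_def by simp
    qed
    finally show ?thesis unfolding H_def by simp
  qed
  have "Lam BB N a (Suc k) = phi a * H N a k + (\<Sum>m'\<in>{0..BB}. G m' * (if a < m' then phi m' else phi a))"
    unfolding Lam_def Wsuc Hsuc distrib_left sum_distrib_left add.assoc[symmetric]
    by (subst add.commute, subst add.assoc, subst sum.distrib[symmetric], simp, rule sum.cong) auto
  also have "\<dots> \<le> phi a * H N a k + (\<Sum>m'\<in>{0..BB}. G m' * phi m')"
    by (intro add_left_mono sum_mono mult_left_mono) (auto simp: G_nonneg intro: phi_antimono)
  also have "(\<Sum>m'\<in>{0..BB}. G m' * phi m') = (\<Sum>m'\<in>{0..BB}. \<Sum>m\<in>{0..BB}. W N a k m * bmc_trans m m' * phi m')"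
    by (rule sum.cong[OF refl]) (simp add: G sum_distrib_right)
  also have "\<dots> = (\<Sum>m\<in>{0..BB}. W N a k m * (\<Sum>m'\<in>{0..BB}. bmc_trans m m' * phi m'))"
    by (subst sum.swap) (simp add: sum_distrib_left mult.assoc)
  also have "\<dots> \<le> (\<Sum>m\<in>{0..BB}. W N a k m * phi m)"
    by (intro sum_mono mult_left_mono super_le W_nonneg)
  finally show ?thesis unfolding Lam_def by simp
qed

lemma maximal: "phi a * prob {\<omega> \<in> space M. \<exists>t. N \<le> t \<and> t \<le> N + K \<and> X t \<omega> \<le> a} \<le> u N"
proof -
  define BB where "BB = m0 + N + K + 1"
  have L: "k \<le> K \<Longrightarrow> Lam BB N a k \<le> u N" for k
  proof (induction k)
    case 0 then show ?case by (intro Lam_0) (simp add: BB_def)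
  next
    case (Suc k)
    have "Lam BB N a (Suc k) \<le> Lam BB N a k" by (rule Lam_step) (use Suc in \<open>simp add: BB_def\<close>)
    then show ?case using Suc by simp
  qed
  have e: "{\<omega> \<in> space M. \<exists>t. N \<le> t \<and> t \<le> N + K \<and> X t \<omega> \<le> a} = {\<omega> \<in> space M. \<not> NH N a K (\<lambda>i. X i \<omega>)}"
    unfolding NH_def by (auto simp: not_less)
  have "phi a * H N a K \<le> Lam BB N a K"
    unfolding Lam_def by (simp add: sum_nonneg W_nonneg less_imp_le[OF phi_pos])
  also have "\<dots> \<le> u N" by (rule L) simp
  finally show ?thesis unfolding e H_def .
qed

end

context bmc begin

definition LL :: "real \<Rightarrow> nat \<Rightarrow> real" where "LL e j = (real j * ln 8) powr (2+e)"
definition yy :: "real \<Rightarrow> nat \<Rightarrow> nat \<Rightarrow> real" where "yy e c j = real c * 4^(j+1) / LL e j"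
definition aa :: "real \<Rightarrow> nat \<Rightarrow> nat \<Rightarrow> nat" where "aa e c j = nat \<lceil>yy e c j\<rceil>"
definition EE :: "real \<Rightarrow> nat \<Rightarrow> nat \<Rightarrow> 'a set" where
  "EE e c j = {\<omega> \<in> space M. \<exists>t. 8^j \<le> t \<and> t \<le> 8^j + 7*8^j \<and> X t \<omega> \<le> aa e c j}"

lemma EE_sets: "EE e c j \<in> events"
proof -
  have d: "dep (8^j + 7*8^j) (\<lambda>s. \<exists>t. 8^j \<le> t \<and> t \<le> 8^j + 7*8^j \<and> s t \<le> aa e c j)"
    unfolding dep_def by auto
  show ?thesis unfolding EE_def by (rule PS_sets[OF d])
qed

lemma LL_pos: "j \<ge> 1 \<Longrightarrow> LL e j > 0"
  unfolding LL_def by simp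

lemma yy_nonneg: "j \<ge> 1 \<Longrightarrow> yy e c j \<ge> 0"
  unfolding yy_def using LL_pos[of j e] by simp

lemma u_pow: "u (8^j) \<le> 3/2^j"
proof -
  have "u (8^j) ^ 3 \<le> 16 / real (8^j)" by (rule u_cube) simp
  also have "\<dots> \<le> 27 / 8^j" by (simp add: divide_right_mono)
  also have "\<dots> = (3/2^j)^3"
  proof -
    have a: "((2::real)^j)^3 = (2^3)^j" by (simp only: power_mult[symmetric] mult.commute)
    have b: "((2::real)^3)^j = 8^j" by simp
    show ?thesis by (simp only: power_divide a b) simp
  qed
  finally have "u (8^j) ^ Suc 2 \<le> (3/2^j) ^ Suc 2" by (simp add: numeral_3_eq_3)
  then show ?thesis by (rule power_le_imp_le_base) simp
qed

lemma EE_bound: assumes "j \<ge> 1"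
  shows "prob (EE e c j) \<le> 3 * sqrt(8*real c/LL e j) + 3 * sqrt 3/2^j"
proof -
  let ?a = "aa e c j"
  have ph: "phi ?a > 0" by (rule phi_pos)
  have m: "phi ?a * prob (EE e c j) \<le> u (8^j)"
    unfolding EE_def by (rule maximal)
  have p: "prob (EE e c j) \<le> u (8^j) * (1 / phi ?a)"
    using m ph by (simp add: field_simps mult.commute)
  have y0: "yy e c j \<ge> 0" by (rule yy_nonneg[OF assms])
  have A: "real ?a \<le> yy e c j + 1"
  proof -
    have "real ?a = real_of_int \<lceil>yy e c j\<rceil>" unfolding aa_def using y0 by simp
    also have "\<dots> \<le> yy e c j + 1" using ceiling_correct[of "yy e c j"] by linarith
    finally show ?thesis .
  qed
  show ?thesis
    by (rule bound_aux[OF p _ u_pow _ inv_phi_le A yy_def LL_pos[OF assms]])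
       (use ph u_pos[of "8^j"] in auto)
qed

lemma summable_EE: assumes "e > 0" shows "summable (\<lambda>j. prob (EE e c j))"
proof (rule summable_comparison_test'[where N=1])
  let ?q = "1+e/2"
  let ?K1 = "3 * (sqrt(8*real c) / (ln 8 powr ?q))"
  let ?K2 = "3 * sqrt 3"
  show "summable (\<lambda>j. ?K1 * real j powr (-?q) + ?K2 * (1/2::real)^j)"
    by (rule summable_g[OF assms])
  fix j :: nat assume j: "j \<ge> 1"
  have "norm (prob (EE e c j)) = prob (EE e c j)" by simp
  also have "\<dots> \<le> 3 * sqrt(8*real c/LL e j) + 3 * sqrt 3/2^j" by (rule EE_bound[OF j])
  also have "\<dots> = ?K1 * real j powr (-?q) + ?K2 * (1/2::real)^j"
    unfolding LL_def sqrt_L[OF j assms of_nat_0_le_iff] by (simp add: power_one_over)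
  finally show "norm (prob (EE e c j)) \<le> ?K1 * real j powr (-?q) + ?K2 * (1/2::real)^j" .
qed

lemma AE_c: assumes "e > 0" shows "AE \<omega> in M. eventually (\<lambda>j. \<omega> \<in> space M - EE e c j) sequentially"
proof (rule borel_cantelli_AE1)
  show "\<And>j. EE e c j \<in> events" by (rule EE_sets)
  show "\<And>j. emeasure M (EE e c j) < \<infinity>" using emeasure_finite by (simp add: less_top[symmetric])
  show "summable (\<lambda>j. prob (EE e c j))" by (rule summable_EE[OF assms])
qed

lemma pointwise: assumes e: "e > 0"
  and H: "\<forall>c. eventually (\<lambda>j. \<omega> \<in> space M - EE e c j) sequentially"
  shows "filterlim (\<lambda>n. real (X n \<omega>) * ln (real n) powr (2 + e) / real n powr (2/3)) at_top sequentially"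
  unfolding filterlim_at_top
proof
  fix Z :: real
  define c where "c = nat \<lceil>Z\<rceil>"
  have cZ: "Z \<le> real c" unfolding c_def by (rule real_nat_ceiling_ge)
  obtain J where J: "\<And>j. j \<ge> J \<Longrightarrow> \<omega> \<in> space M - EE e c j"
    using H[rule_format, of c] unfolding eventually_sequentially by blast
  define J' where "J' = max J 1"
  show "eventually (\<lambda>n. Z \<le> real (X n \<omega>) * ln (real n) powr (2 + e) / real n powr (2/3)) sequentially"
    unfolding eventually_sequentially
  proof (intro exI allI impI)
    fix n :: nat assume n: "n \<ge> 8^J'"
    have n1: "n \<ge> 1" using n by (metis le_trans one_le_numeral one_le_power)
    obtain j where j: "8^j \<le> n" "n < 8^(j+1)" using ex_power_ivl1[of 8 n] n1 by auto
    have jJ: "J' \<le> j"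
    proof (rule ccontr)
      assume "\<not> J' \<le> j"
      then have "8^(j+1) \<le> (8::nat)^J'" by (intro power_increasing) auto
      then show False using j n by linarith
    qed
    have j1: "j \<ge> 1" using jJ unfolding J'_def by simp
    have nE: "\<omega> \<notin> EE e c j" using J[of j] jJ unfolding J'_def by auto
    have w: "\<omega> \<in> space M" using J[of j] jJ unfolding J'_def by auto
    have e8: "(8::nat)^(j+1) = 8^j + 7*8^j" by simp
    have tn: "8^j \<le> n \<and> n \<le> 8^j + 7*8^j" using j e8 by linarith
    have "\<not> X n \<omega> \<le> aa e c j"
    proof
      assume "X n \<omega> \<le> aa e c j"
      then have "\<omega> \<in> EE e c j" using w tn unfolding EE_def by blast
      then show False using nE by contradiction
    qed
    then have Xa: "real (X n \<omega>) \<ge> yy e c j"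
    proof -
      assume "\<not> X n \<omega> \<le> aa e c j"
      then have "real (X n \<omega>) \<ge> real (aa e c j)" by simp
      moreover have "real (aa e c j) \<ge> yy e c j" unfolding aa_def by (rule real_nat_ceiling_ge)
      ultimately show ?thesis by linarith
    qed
    have Lp: "LL e j > 0" by (rule LL_pos[OF j1])
    have y0: "yy e c j \<ge> 0" by (rule yy_nonneg[OF j1])
    have LP: "LL e j \<le> ln (real n) powr (2+e)"
    proof -
      have "real j * ln 8 = ln ((8::real)^j)" by (simp add: ln_realpow)
      also have "\<dots> \<le> ln (real n)"
      proof -
        have "(8::real)^j \<le> real n" using j(1) by (metis of_nat_le_iff of_nat_numeral of_nat_power)
        then show ?thesis using n1 by (subst ln_le_cancel_iff) auto
      qed
      finally have "real j * ln 8 \<le> ln (real n)" .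
      then show ?thesis unfolding LL_def by (intro powr_mono2) (use e in auto)
    qed
    have Q: "real n powr (2/3) \<le> 4^(j+1)"
    proof (rule n_powr_bound[OF n1])
      have "n \<le> 8^(j+1)" using j(2) by simp
      then show "real n \<le> 8^(j+1)" by (metis of_nat_le_iff of_nat_numeral of_nat_power)
    qed
    have Qp: "real n powr (2/3) > 0" using n1 by simp
    have "Z \<le> real c" by fact
    also have "real c = yy e c j * LL e j / 4^(j+1)" unfolding yy_def using Lp by simp
    also have "\<dots> \<le> real (X n \<omega>) * ln (real n) powr (2+e) / 4^(j+1)"
      by (intro divide_right_mono mult_mono Xa LP) (use y0 Lp in auto)
    also have "\<dots> \<le> real (X n \<omega>) * ln (real n) powr (2+e) / real n powr (2/3)"
    proof (rule divide_left_mono[OF Q])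
      show "0 \<le> real (X n \<omega>) * ln (real n) powr (2+e)" by simp
      show "0 < 4^(j+1) * real n powr (2/3)" by (rule mult_pos_pos) (use Qp in simp_all)
    qed
    finally show "Z \<le> real (X n \<omega>) * ln (real n) powr (2 + e) / real n powr (2/3)" .
  qed
qed

lemma main: assumes "e > 0"
  shows "AE \<omega> in M. filterlim (\<lambda>n. real (X n \<omega>) * ln (real n) powr (2 + e) / real n powr (2/3)) at_top sequentially"
proof -
  have "\<forall>c::nat. AE \<omega> in M. eventually (\<lambda>j. \<omega> \<in> space M - EE e c j) sequentially"
    using AE_c[OF assms] by blast
  then have "AE \<omega> in M. \<forall>c::nat. eventually (\<lambda>j. \<omega> \<in> space M - EE e c j) sequentially"
    by (simp add: AE_all_countable)
  then show ?thesis by (rule eventually_mono) (rule pointwise[OF assms])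
qed

end

theorem theorem3p5:
  fixes M :: "'a measure" and X :: "nat \<Rightarrow> 'a \<Rightarrow> nat" and m0 :: nat and \<epsilon> :: real
  assumes "boundary_markov_chain M X m0" and "\<epsilon> > 0"
  shows "AE \<omega> in M. filterlim
           (\<lambda>n. real (X n \<omega>) * ln (real n) powr (2 + \<epsilon>) / real n powr (2/3))
           at_top sequentially"
proof -
  interpret bmc M X m0
    using assms(1) unfolding boundary_markov_chain_def bmc_def bmc_axioms_def by blast
  show ?thesis by (rule main[OF assms(2)])
qed


end
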